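(* Let $t\in\{0,\dots,T\}$, and let $\hat\sigma_t:\mathcal{M}_t\to\hat{\mathcal{P}}_t$, $\hat\sigma_{t+1}:\mathcal{M}_{t+1}\to\hat{\mathcal{P}}_{t+1}$ with $\hat\Pi_t=\hat\sigma_t(M_t)$, $\hat\Pi_{t+1}=\hat\sigma_{t+1}(M_{t+1})$. Suppose (a) there are a function $\hat f_t:\hat{\mathcal{P}}_t\times\mathcal{U}_t\times\mathcal{Y}_{t+1}\to\hat{\mathcal{P}}_{t+1}$ and $L_{\hat f_t}\ge0$ with $\eta(\hat f_t(\hat\pi^1,u,y^1),\hat f_t(\hat\pi^2,u,y^2))\le L_{\hat f_t}(\eta(\hat\pi^1,\hat\pi^2)+\eta(y^1,y^2))$ for all arguments, and $\hat\sigma_{t+1}(m_{t+1})=\hat f_t(\hat\sigma_t(m_t),u_t,y_{t+1})$ whenever $m_{t+1}$ consists of $m_t,u_t,y_{t+1}$; (b) there is $\delta_t^{\mathrm{ob}}\ge0$ with $\mathcal{H}([[Y_{t+1}|m_t,u_t]],[[Y_{t+1}|\hat\sigma_t(m_t),u_t]])\le\delta_t^{\mathrm{ob}}$ for all $m_t\in[[M_t]]$, $u_t\in[[U_t]]$; and (c) there is $\lambda_t^{\mathrm{ob}}\ge0$ with $\mathcal{H}([[Y_{t+1}|\hat\pi_t^1,u_t]],[[Y_{t+1}|\hat\pi_t^2,u_t]])\le\lambda_t^{\mathrm{ob}}\eta(\hat\pi_t^1,\hat\pi_t^2)$ for all $\hat\pi_t^1,\hat\pi_t^2\in[[\hat\Pi_t]]$,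 $u_t\in[[U_t]]$. Then there is $\lambda_t\ge0$ with $\mathcal{H}([[\hat\Pi_{t+1}|\hat\pi_t^1,u_t]],[[\hat\Pi_{t+1}|\hat\pi_t^2,u_t]])\le\lambda_t\,\eta(\hat\pi_t^1,\hat\pi_t^2)$ for all $\hat\pi_t^1,\hat\pi_t^2\in[[\hat\Pi_t]]$, $u_t\in[[U_t]]$.
   Context: Uncertain variables: fix a sample space $\Omega$; an uncertain variable with values in a set $\mathcal{X}$ is a map $X:\Omega\to\mathcal{X}$, with marginal range $[[X]]:=\{X(\omega):\omega\in\Omega\}$; uncertain variables are independent if their joint range is the product of their marginal ranges. Hausdorff distance: for nonempty subsets $\mathcal{A},\mathcal{B}$ of a metric space $(\mathcal{S},\eta)$, $\mathcal{H}(\mathcal{A},\mathcal{B}):=\max\{\sup_{a\in\mathcal{A}}\inf_{b\in\mathcal{B}}\eta(a,b),\sup_{b\in\mathcal{B}}\inf_{a\in\mathcal{A}}\eta(a,b)\}$. System: horizon $T\in\mathbb{N}$. For $t=0,\dots,T$ there are independent disturbances $W_t\in\mathcal{W}_t$, actions $U_t\in\mathcal{U}_t$ taking values in a given set $[[U_t]]\subseteq\mathcal{U}_t$, observations $Y_0=h_0(W_0)$, $Y_{t+1}=h_{t+1}(W_{0:t},U_{0:t})$; $\mathcal{U}_t,\mathcal{W}_t,\mathcal{Y}_t$ are bounded subsets of a metric space $(\mathcal{S},\eta)$ and $\hat{\mathcal{P}}_t$ are bounded metric spaces (metric also denoted $\eta$). The memory is $M_t=(Y_{0:t},U_{0:t-1})\in\mathcal{M}_t:=\prod_{\ell=0}^t\mathcal{Y}_\ell\times\prod_{\ell=0}^{t-1}\mathcal{U}_\ell$.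 Strategy-independent ranges: for $m_t=(y_{0:t},u_{0:t-1})$ let $\mathcal{W}(m_t)$ be the set of $w_{0:t}\in\prod_{\ell=0}^t[[W_\ell]]$ with $y_0=h_0(w_0)$ and $y_\ell=h_\ell(w_{0:\ell-1},u_{0:\ell-1})$ for $\ell=1,\dots,t$. Let $[[M_t]]$ be the set of such $m_t$ with $u_\ell\in[[U_\ell]]$ and $\mathcal{W}(m_t)\neq\emptyset$. For $m_t\in[[M_t]]$, $u_t\in[[U_t]]$: $[[Y_{t+1}|m_t,u_t]]:=\{h_{t+1}(w_{0:t},u_{0:t}):w_{0:t}\in\mathcal{W}(m_t)\}$, $[[M_{t+1}|m_t,u_t]]:=\{(m_t,u_t,y_{t+1}):y_{t+1}\in[[Y_{t+1}|m_t,u_t]]\}$. With $\hat\Pi_t=\hat\sigma_t(M_t)$: $[[\hat\Pi_t]]:=\hat\sigma_t([[M_t]])$, $[[M_t|\hat\pi_t]]:=\{m_t\in[[M_t]]:\hat\sigma_t(m_t)=\hat\pi_t\}$, $[[\hat\Pi_{t+1}|m_t,u_t]]:=\{\hat\sigma_{t+1}(m_{t+1}):m_{t+1}\in[[M_{t+1}|m_t,u_t]]\}$, and for $Z\in\{Y_{t+1},\hat\Pi_{t+1}\}$, $[[Z|\hat\pi_t,u_t]]:=\bigcup_{m_t\in[[M_t|\hat\pi_t]]}[[Z|m_t,u_t]]$. *)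

theory Defs
  imports "HOL-Analysis.Analysis"
begin

text \<open>Hausdorff distance, as in the paper (used only for nonempty bounded sets,
  where the real-valued SUP/INF are the genuine suprema/infima).\<close>
definition hausdorff :: "'a::metric_space set \<Rightarrow> 'a set \<Rightarrow> real" where
  "hausdorff A B = max (SUP a\<in>A. INF b\<in>B. dist a b) (SUP b\<in>B. INF a\<in>A. dist a b)"

text \<open>A memory m_t = (y_{0:t}, u_{0:t-1}) is a pair of lists (ys, us) with
  length ys = t+1, length us = t.  All of Y, U, W take values in one metric type 's.
  Wr l = [[W_l]], Ur l = [[U_l]]; h0 = h_0; h t ws us = h_{t+1}(w_{0:t}, u_{0:t}).\<close>

definition Mspace :: "(nat \<Rightarrow> 's set) \<Rightarrow> (nat \<Rightarrow> 's set) \<Rightarrow> nat \<Rightarrow> ('s list \<times> 's list) set" where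
  "Mspace Ysp Usp t = {(ys, us). length ys = Suc t \<and> length us = t \<and>
     (\<forall>l<Suc t. ys ! l \<in> Ysp l) \<and> (\<forall>l<t. us ! l \<in> Usp l)}"

definition Wcons :: "(nat \<Rightarrow> 's set) \<Rightarrow> ('s \<Rightarrow> 's) \<Rightarrow> (nat \<Rightarrow> 's list \<Rightarrow> 's list \<Rightarrow> 's)
     \<Rightarrow> 's list \<times> 's list \<Rightarrow> 's list set" where
  "Wcons Wr h0 h m = {ws. length ws = length (fst m) \<and> (\<forall>l<length ws. ws ! l \<in> Wr l) \<and>
     fst m ! 0 = h0 (ws ! 0) \<and>
     (\<forall>l. 1 \<le> l \<and> l < length (fst m) \<longrightarrow> fst m ! l = h (l - 1) (take l ws) (take l (snd m)))}"

definition Mrange :: "(nat \<Rightarrow> 's set) \<Rightarrow> (nat \<Rightarrow> 's set) \<Rightarrow> (nat \<Rightarrow> 's set) \<Rightarrow> (nat \<Rightarrow> 's set)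
     \<Rightarrow> ('s \<Rightarrow> 's) \<Rightarrow> (nat \<Rightarrow> 's list \<Rightarrow> 's list \<Rightarrow> 's) \<Rightarrow> nat \<Rightarrow> ('s list \<times> 's list) set" where
  "Mrange Ysp Usp Wr Ur h0 h t = {m \<in> Mspace Ysp Usp t.
     (\<forall>l<t. snd m ! l \<in> Ur l) \<and> Wcons Wr h0 h m \<noteq> {}}"

definition Ynext_m :: "(nat \<Rightarrow> 's set) \<Rightarrow> ('s \<Rightarrow> 's) \<Rightarrow> (nat \<Rightarrow> 's list \<Rightarrow> 's list \<Rightarrow> 's)
     \<Rightarrow> 's list \<times> 's list \<Rightarrow> 's \<Rightarrow> 's set" where
  "Ynext_m Wr h0 h m u = (\<lambda>ws. h (length (snd m)) ws (snd m @ [u])) ` Wcons Wr h0 h m"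

definition Mnext_m :: "(nat \<Rightarrow> 's set) \<Rightarrow> ('s \<Rightarrow> 's) \<Rightarrow> (nat \<Rightarrow> 's list \<Rightarrow> 's list \<Rightarrow> 's)
     \<Rightarrow> 's list \<times> 's list \<Rightarrow> 's \<Rightarrow> ('s list \<times> 's list) set" where
  "Mnext_m Wr h0 h m u = (\<lambda>y. (fst m @ [y], snd m @ [u])) ` Ynext_m Wr h0 h m u"

definition Mgiven :: "(nat \<Rightarrow> 's set) \<Rightarrow> (nat \<Rightarrow> 's set) \<Rightarrow> (nat \<Rightarrow> 's set) \<Rightarrow> (nat \<Rightarrow> 's set)
     \<Rightarrow> ('s \<Rightarrow> 's) \<Rightarrow> (nat \<Rightarrow> 's list \<Rightarrow> 's list \<Rightarrow> 's) \<Rightarrow> nat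
     \<Rightarrow> ('s list \<times> 's list \<Rightarrow> 'p) \<Rightarrow> 'p \<Rightarrow> ('s list \<times> 's list) set" where
  "Mgiven Ysp Usp Wr Ur h0 h t \<sigma> \<pi> = {m \<in> Mrange Ysp Usp Wr Ur h0 h t. \<sigma> m = \<pi>}"

definition Ynext_pi :: "(nat \<Rightarrow> 's set) \<Rightarrow> (nat \<Rightarrow> 's set) \<Rightarrow> (nat \<Rightarrow> 's set) \<Rightarrow> (nat \<Rightarrow> 's set)
     \<Rightarrow> ('s \<Rightarrow> 's) \<Rightarrow> (nat \<Rightarrow> 's list \<Rightarrow> 's list \<Rightarrow> 's) \<Rightarrow> nat
     \<Rightarrow> ('s list \<times> 's list \<Rightarrow> 'p) \<Rightarrow> 'p \<Rightarrow> 's \<Rightarrow> 's set" where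
  "Ynext_pi Ysp Usp Wr Ur h0 h t \<sigma> \<pi> u =
     (\<Union>m\<in>Mgiven Ysp Usp Wr Ur h0 h t \<sigma> \<pi>. Ynext_m Wr h0 h m u)"

definition Pinext_pi :: "(nat \<Rightarrow> 's set) \<Rightarrow> (nat \<Rightarrow> 's set) \<Rightarrow> (nat \<Rightarrow> 's set) \<Rightarrow> (nat \<Rightarrow> 's set)
     \<Rightarrow> ('s \<Rightarrow> 's) \<Rightarrow> (nat \<Rightarrow> 's list \<Rightarrow> 's list \<Rightarrow> 's) \<Rightarrow> nat
     \<Rightarrow> ('s list \<times> 's list \<Rightarrow> 'p) \<Rightarrow> ('s list \<times> 's list \<Rightarrow> 'q) \<Rightarrow> 'p \<Rightarrow> 's \<Rightarrow> 'q set" where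
  "Pinext_pi Ysp Usp Wr Ur h0 h t \<sigma> \<sigma>' \<pi> u =
     (\<Union>m\<in>Mgiven Ysp Usp Wr Ur h0 h t \<sigma> \<pi>. \<sigma>' ` Mnext_m Wr h0 h m u)"

end

theory Submission
  imports Defs
begin

lemma haus_le:
  fixes A B :: "'a::metric_space set"
  assumes "A \<noteq> {}" "B \<noteq> {}"
    and ab: "\<forall>a\<in>A. \<forall>e>0. \<exists>b\<in>B. dist a b \<le> c + e"
    and ba: "\<forall>b\<in>B. \<forall>e>0. \<exists>a\<in>A. dist a b \<le> c + e"
  shows "hausdorff A B \<le> c"
  unfolding hausdorff_def
proof (rule max.boundedI)
  show "(SUP a\<in>A. INF b\<in>B. dist a b) \<le> c"
  proof (rule cSUP_least[OF assms(1)])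
    fix a assume a: "a \<in> A"
    show "(INF b\<in>B. dist a b) \<le> c"
    proof (rule field_le_epsilon)
      fix e :: real assume "e > 0"
      then obtain b where b: "b \<in> B" "dist a b \<le> c + e" using ab a by blast
      have bd: "bdd_below ((\<lambda>b. dist a b) ` B)" by (rule bdd_belowI[of _ 0]) auto
      show "(INF b\<in>B. dist a b) \<le> c + e"
        by (rule cINF_lower2[OF bd b])
    qed
  qed
  show "(SUP b\<in>B. INF a\<in>A. dist a b) \<le> c"
  proof (rule cSUP_least[OF assms(2)])
    fix b assume b: "b \<in> B"
    show "(INF a\<in>A. dist a b) \<le> c"
    proof (rule field_le_epsilon)
      fix e :: real assume "e > 0"
      then obtain a where a: "a \<in> A" "dist a b \<le> c + e" using ba b by blast
      have bd: "bdd_below ((\<lambda>a. dist a b) ` A)" by (rule bdd_belowI[of _ 0]) auto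
      show "(INF a\<in>A. dist a b) \<le> c + e"
        by (rule cINF_lower2[OF bd a])
    qed
  qed
qed

lemma haus_comm: "hausdorff A B = hausdorff B A"
  unfolding hausdorff_def by (simp add: dist_commute max.commute)

lemma haus_get:
  fixes A B :: "'a::metric_space set"
  assumes "bounded A" "bounded B" "B \<noteq> {}" "hausdorff A B \<le> c" "a \<in> A" "e > 0"
  shows "\<exists>b\<in>B. dist a b < c + e"
proof -
  have "bounded (A \<union> B)" using assms(1,2) by simp
  then obtain x r where xr: "\<forall>z\<in>A \<union> B. dist x z \<le> r"
    unfolding bounded_def by blast
  obtain b0 where b0: "b0 \<in> B" using assms(3) by blast
  have bd: "bdd_above ((\<lambda>a. INF b\<in>B. dist a b) ` A)"
  proof (rule bdd_aboveI[of _ "2*r"])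
    fix z assume "z \<in> (\<lambda>a. INF b\<in>B. dist a b) ` A"
    then obtain a' where a': "a' \<in> A" "z = (INF b\<in>B. dist a' b)" by blast
    have bd0: "bdd_below ((\<lambda>b. dist a' b) ` B)" by (rule bdd_belowI[of _ 0]) auto
    have "z \<le> dist a' b0" unfolding a'(2)
      by (rule cINF_lower2[OF bd0 b0 order_refl])
    also have "\<dots> \<le> dist x a' + dist x b0" using dist_triangle[of a' b0 x] by (simp add: dist_commute)
    also have "\<dots> \<le> 2*r"
    proof -
      have "dist x a' \<le> r" "dist x b0 \<le> r" using xr a'(1) b0 by auto
      then show ?thesis by linarith
    qed
    finally show "z \<le> 2*r" .
  qed
  have "(INF b\<in>B. dist a b) \<le> (SUP a\<in>A. INF b\<in>B. dist a b)"
    using cSUP_upper[OF assms(5) bd] .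
  also have "\<dots> \<le> c" using assms(4) unfolding hausdorff_def by (rule max.boundedE)
  finally have "(INF b\<in>B. dist a b) < c + e" using assms(6) by simp
  then show ?thesis
  proof -
    have "bdd_below ((\<lambda>b. dist a b) ` B)" by (rule bdd_belowI[of _ 0]) auto
    from cINF_less_iff[OF assms(3) this] show ?thesis using \<open>(INF b\<in>B. dist a b) < c + e\<close> by simp
  qed
qed

theorem lemma3:
  fixes T t :: nat
    and Ysp Usp Wsp Ur Wr :: "nat \<Rightarrow> 's::metric_space set"
    and h0 :: "'s \<Rightarrow> 's" and h :: "nat \<Rightarrow> 's list \<Rightarrow> 's list \<Rightarrow> 's"
    and \<sigma> :: "'s list \<times> 's list \<Rightarrow> 'p::metric_space"
    and \<sigma>' :: "'s list \<times> 's list \<Rightarrow> 'q::metric_space"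
    and f :: "'p \<Rightarrow> 's \<Rightarrow> 's \<Rightarrow> 'q"
    and Lf \<delta> lamob :: real
  assumes tT: "t \<le> T"
    and bY: "\<And>l. bounded (Ysp l)" and bU: "\<And>l. bounded (Usp l)" and bW: "\<And>l. bounded (Wsp l)"
    and bP: "bounded (UNIV :: 'p set)" and bQ: "bounded (UNIV :: 'q set)"
    and Ur_sub: "\<And>l. Ur l \<subseteq> Usp l" and Wr_sub: "\<And>l. Wr l \<subseteq> Wsp l"
    and h0_in: "\<And>w. w \<in> Wsp 0 \<Longrightarrow> h0 w \<in> Ysp 0"
    and h_in: "\<And>k ws us. length ws = Suc k \<Longrightarrow> length us = Suc k \<Longrightarrow>
                 (\<forall>l<Suc k. ws ! l \<in> Wsp l) \<Longrightarrow> (\<forall>l<Suc k. us ! l \<in> Usp l) \<Longrightarrow>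
                 h k ws us \<in> Ysp (Suc k)"
    and Lf_nonneg: "Lf \<ge> 0"
    and f_lip: "\<And>\<pi>1 \<pi>2 u y1 y2. u \<in> Usp t \<Longrightarrow> y1 \<in> Ysp (Suc t) \<Longrightarrow> y2 \<in> Ysp (Suc t) \<Longrightarrow>
                 dist (f \<pi>1 u y1) (f \<pi>2 u y2) \<le> Lf * (dist \<pi>1 \<pi>2 + dist y1 y2)"
    and f_rec: "\<And>ys us u y. (ys, us) \<in> Mspace Ysp Usp t \<Longrightarrow> u \<in> Usp t \<Longrightarrow> y \<in> Ysp (Suc t) \<Longrightarrow>
                 \<sigma>' (ys @ [y], us @ [u]) = f (\<sigma> (ys, us)) u y"
    and \<delta>_nonneg: "\<delta> \<ge> 0"
    and hyp_b: "\<And>m u. m \<in> Mrange Ysp Usp Wr Ur h0 h t \<Longrightarrow> u \<in> Ur t \<Longrightarrow>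
                 hausdorff (Ynext_m Wr h0 h m u) (Ynext_pi Ysp Usp Wr Ur h0 h t \<sigma> (\<sigma> m) u) \<le> \<delta>"
    and lamob_nonneg: "lamob \<ge> 0"
    and hyp_c: "\<And>\<pi>1 \<pi>2 u. \<pi>1 \<in> \<sigma> ` Mrange Ysp Usp Wr Ur h0 h t \<Longrightarrow>
                 \<pi>2 \<in> \<sigma> ` Mrange Ysp Usp Wr Ur h0 h t \<Longrightarrow> u \<in> Ur t \<Longrightarrow>
                 hausdorff (Ynext_pi Ysp Usp Wr Ur h0 h t \<sigma> \<pi>1 u) (Ynext_pi Ysp Usp Wr Ur h0 h t \<sigma> \<pi>2 u)
                   \<le> lamob * dist \<pi>1 \<pi>2"
  shows "\<exists>lam\<ge>0. \<forall>\<pi>1 \<in> \<sigma> ` Mrange Ysp Usp Wr Ur h0 h t. \<forall>\<pi>2 \<in> \<sigma> ` Mrange Ysp Usp Wr Ur h0 h t.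
           \<forall>u \<in> Ur t.
             hausdorff (Pinext_pi Ysp Usp Wr Ur h0 h t \<sigma> \<sigma>' \<pi>1 u) (Pinext_pi Ysp Usp Wr Ur h0 h t \<sigma> \<sigma>' \<pi>2 u)
               \<le> lam * dist \<pi>1 \<pi>2"
  proof -
  let ?MR = "Mrange Ysp Usp Wr Ur h0 h t"
  let ?Yp = "Ynext_pi Ysp Usp Wr Ur h0 h t \<sigma>"
  let ?Pp = "Pinext_pi Ysp Usp Wr Ur h0 h t \<sigma> \<sigma>'"
  have mr: "m \<in> Mspace Ysp Usp t" "length (snd m) = t" "length (fst m) = Suc t"
    "\<forall>l<t. snd m ! l \<in> Ur l" "Wcons Wr h0 h m \<noteq> {}" if "m \<in> ?MR" for m
    using that unfolding Mrange_def Mspace_def by auto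
  have Ysub: "Ynext_m Wr h0 h m u \<subseteq> Ysp (Suc t)" if m: "m \<in> ?MR" and u: "u \<in> Ur t" for m u
  proof
    fix y assume "y \<in> Ynext_m Wr h0 h m u"
    then obtain ws where ws: "ws \<in> Wcons Wr h0 h m" and y: "y = h (length (snd m)) ws (snd m @ [u])"
      unfolding Ynext_m_def by blast
    have lw: "length ws = Suc t" "\<forall>l<length ws. ws ! l \<in> Wr l"
      using ws mr[OF m] unfolding Wcons_def by auto
    have "\<forall>l<Suc t. ws ! l \<in> Wsp l" using lw Wr_sub by auto
    moreover have "\<forall>l<Suc t. (snd m @ [u]) ! l \<in> Usp l"
    proof (intro allI impI)
      fix l assume "l < Suc t"
      then consider "l < t" | "l = t" by linarith
      then show "(snd m @ [u]) ! l \<in> Usp l"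
      proof cases
        case 1 then show ?thesis using mr[OF m] Ur_sub by (auto simp: nth_append)
      next
        case 2 then show ?thesis using mr[OF m] Ur_sub u by (auto simp: nth_append)
      qed
    qed
    ultimately show "y \<in> Ysp (Suc t)" unfolding y using h_in[of ws t "snd m @ [u]"] lw mr[OF m] by simp
  qed
  have Yne: "Ynext_m Wr h0 h m u \<noteq> {}" if "m \<in> ?MR" for m u
    using mr[OF that] unfolding Ynext_m_def by auto
  have Ypne: "?Yp \<pi> u \<noteq> {}" if "\<pi> \<in> \<sigma> ` ?MR" for \<pi> u
    using that Yne unfolding Ynext_pi_def Mgiven_def by fastforce
  have Ypb: "bounded (?Yp \<pi> u)" if "u \<in> Ur t" for \<pi> u
    by (rule bounded_subset[OF bY[of "Suc t"]])
       (use Ysub that in \<open>auto simp: Ynext_pi_def Mgiven_def\<close>)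
  have Ppne: "?Pp \<pi> u \<noteq> {}" if "\<pi> \<in> \<sigma> ` ?MR" for \<pi> u
    using that Yne unfolding Pinext_pi_def Mgiven_def Mnext_m_def by fastforce
  define lam where "lam = Lf * (1 + lamob)"
  have lam0: "lam \<ge> 0" unfolding lam_def using Lf_nonneg lamob_nonneg by simp
  have key: "\<exists>q2\<in>?Pp \<pi>2 u. dist q1 q2 \<le> lam * dist \<pi>1 \<pi>2 + e"
    if p1: "\<pi>1 \<in> \<sigma> ` ?MR" and p2: "\<pi>2 \<in> \<sigma> ` ?MR" and u: "u \<in> Ur t"
      and q1: "q1 \<in> ?Pp \<pi>1 u" and e: "e > 0" for \<pi>1 \<pi>2 u q1 e
  proof -
    obtain m1 y1 where m1: "m1 \<in> ?MR" "\<sigma> m1 = \<pi>1" and y1: "y1 \<in> Ynext_m Wr h0 h m1 u"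
      and q1e: "q1 = \<sigma>' (fst m1 @ [y1], snd m1 @ [u])"
      using q1 unfolding Pinext_pi_def Mgiven_def Mnext_m_def by blast
    have y1p: "y1 \<in> ?Yp \<pi>1 u" using m1 y1 unfolding Ynext_pi_def Mgiven_def by blast
    define e2 where "e2 = e / (Lf + 1)"
    have e2: "e2 > 0" unfolding e2_def using e Lf_nonneg by simp
    obtain y2 where y2p: "y2 \<in> ?Yp \<pi>2 u" and dy: "dist y1 y2 < lamob * dist \<pi>1 \<pi>2 + e2"
      using haus_get[OF Ypb[OF u] Ypb[OF u] Ypne[OF p2] hyp_c[OF p1 p2 u] y1p e2] by blast
    obtain m2 where m2: "m2 \<in> ?MR" "\<sigma> m2 = \<pi>2" and y2: "y2 \<in> Ynext_m Wr h0 h m2 u"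
      using y2p unfolding Ynext_pi_def Mgiven_def by blast
    define q2 where "q2 = \<sigma>' (fst m2 @ [y2], snd m2 @ [u])"
    have q2in: "q2 \<in> ?Pp \<pi>2 u" using m2 y2 unfolding q2_def Pinext_pi_def Mgiven_def Mnext_m_def by blast
    have uU: "u \<in> Usp t" using u Ur_sub by blast
    have y1Y: "y1 \<in> Ysp (Suc t)" using Ysub[OF m1(1) u] y1 by blast
    have y2Y: "y2 \<in> Ysp (Suc t)" using Ysub[OF m2(1) u] y2 by blast
    have "q1 = f \<pi>1 u y1" unfolding q1e using f_rec[of "fst m1" "snd m1" u y1] mr(1)[OF m1(1)] uU y1Y m1(2) by simp
    moreover have "q2 = f \<pi>2 u y2" unfolding q2_def using f_rec[of "fst m2" "snd m2" u y2] mr(1)[OF m2(1)] uU y2Y m2(2) by simp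
    ultimately have "dist q1 q2 \<le> Lf * (dist \<pi>1 \<pi>2 + dist y1 y2)" using f_lip[OF uU y1Y y2Y] by simp
    also have "\<dots> \<le> Lf * (dist \<pi>1 \<pi>2 + (lamob * dist \<pi>1 \<pi>2 + e2))"
      using dy Lf_nonneg by (intro mult_left_mono) auto
    also have "\<dots> = lam * dist \<pi>1 \<pi>2 + Lf * e2" unfolding lam_def by (simp add: algebra_simps)
    also have "Lf * e2 \<le> e" unfolding e2_def using e Lf_nonneg by (simp add: field_simps)
    finally show ?thesis using q2in by auto
  qed
  show ?thesis
  proof (intro exI[of _ lam] conjI lam0 ballI)
    fix \<pi>1 \<pi>2 u assume p1: "\<pi>1 \<in> \<sigma> ` ?MR" and p2: "\<pi>2 \<in> \<sigma> ` ?MR" and u: "u \<in> Ur t"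
    show "hausdorff (?Pp \<pi>1 u) (?Pp \<pi>2 u) \<le> lam * dist \<pi>1 \<pi>2"
    proof (rule haus_le[OF Ppne[OF p1] Ppne[OF p2]])
      show "\<forall>a\<in>?Pp \<pi>1 u. \<forall>e>0. \<exists>b\<in>?Pp \<pi>2 u. dist a b \<le> lam * dist \<pi>1 \<pi>2 + e"
        using key[OF p1 p2 u] by simp
      show "\<forall>b\<in>?Pp \<pi>2 u. \<forall>e>0. \<exists>a\<in>?Pp \<pi>1 u. dist a b \<le> lam * dist \<pi>1 \<pi>2 + e"
      proof (intro ballI allI impI)
        fix b and e :: real assume b: "b \<in> ?Pp \<pi>2 u" and e: "e > 0"
        obtain a where a: "a \<in> ?Pp \<pi>1 u" "dist b a \<le> lam * dist \<pi>2 \<pi>1 + e"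
          using key[OF p2 p1 u b e] by blast
        have "dist a b \<le> lam * dist \<pi>1 \<pi>2 + e" using a(2) by (simp add: dist_commute)
        then show "\<exists>a\<in>?Pp \<pi>1 u. dist a b \<le> lam * dist \<pi>1 \<pi>2 + e" using a(1) by blast
      qed
    qed
  qed
qed

end
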